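(* For every integer $p\ge 0$, the edge set of $K_{4p+3,4p+3,4p+3}\times K_2$ can be partitioned into $2p+2$ planar subgraphs; in particular $\theta(K_{4p+3,4p+3,4p+3}\times K_2)\le 2p+2$.
   Context: The thickness $\theta(G)$ of a graph $G$ is the minimum number of planar subgraphs whose union is $G$. The Kronecker product $G\times H$ of graphs $G$ and $H$ is the graph with vertex set $V(G)\times V(H)$ in which $(g,h)$ and $(g',h')$ are adjacent if and only if $gg'\in E(G)$ and $hh'\in E(H)$. $K_{n,n,n}$ denotes the complete tripartite graph with three parts of size $n$. *)

theory Defs
  imports "HOL-Analysis.Analysis"
begin

definition graph :: "'a set \<Rightarrow> 'a set set \<Rightarrow> bool" where
  "graph V E \<longleftrightarrow> finite V \<and> (\<forall>e\<in>E. e \<subseteq> V \<and> card e = 2)"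

definition planar :: "'a set \<Rightarrow> 'a set set \<Rightarrow> bool" where
  "planar V E \<longleftrightarrow>
     (\<exists>(pos :: 'a \<Rightarrow> complex) (\<gamma> :: 'a set \<Rightarrow> real \<Rightarrow> complex).
        inj_on pos V \<and>
        (\<forall>e\<in>E. arc (\<gamma> e) \<and> {pathstart (\<gamma> e), pathfinish (\<gamma> e)} = pos ` e \<and>
                 path_image (\<gamma> e) \<inter> pos ` V = pos ` e) \<and>
        (\<forall>e\<in>E. \<forall>e'\<in>E. e \<noteq> e' \<longrightarrow>
                 path_image (\<gamma> e) \<inter> path_image (\<gamma> e') \<subseteq> pos ` (e \<inter> e')))"

definition planar_partition :: "'a set \<Rightarrow> 'a set set \<Rightarrow> nat \<Rightarrow> bool" where
  "planar_partition V E k \<longleftrightarrow>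
     (\<exists>f :: 'a set \<Rightarrow> nat. (\<forall>e\<in>E. f e < k) \<and>
        (\<forall>i<k. planar V {e\<in>E. f e = i}))"

definition thickness :: "'a set \<Rightarrow> 'a set set \<Rightarrow> nat" where
  "thickness V E = (LEAST k. planar_partition V E k)"

definition Knnn_V :: "nat \<Rightarrow> (nat \<times> nat) set" where
  "Knnn_V n = {0..<3} \<times> {0..<n}"

definition Knnn_E :: "nat \<Rightarrow> (nat \<times> nat) set set" where
  "Knnn_E n = {{u, v} | u v. u \<in> Knnn_V n \<and> v \<in> Knnn_V n \<and> fst u \<noteq> fst v}"

definition K2_V :: "nat set" where "K2_V = {0, 1}"
definition K2_E :: "nat set set" where "K2_E = {{0, 1}}"

definition kron_V :: "'a set \<Rightarrow> 'b set \<Rightarrow> ('a \<times> 'b) set" where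
  "kron_V V W = V \<times> W"

definition kron_E :: "'a set set \<Rightarrow> 'b set set \<Rightarrow> ('a \<times> 'b) set set" where
  "kron_E E F = {{(g, h), (g', h')} | g g' h h'. {g, g'} \<in> E \<and> {h, h'} \<in> F}"

end

theory Submission imports Defs begin

lemma polar_eq:
  assumes "r > 0" "r' > 0"
  shows "complex_of_real r * cis a = complex_of_real r' * cis b \<longleftrightarrow> r = r' \<and> (\<exists>k::int. a = b + 2*pi*k)"
proof
  assume h: "complex_of_real r * cis a = complex_of_real r' * cis b"
  hence "norm (complex_of_real r * cis a) = norm (complex_of_real r' * cis b)" by simp
  hence rr: "r = r'" using assms by (simp add: norm_mult)
  with h assms have "cis a = cis b" by simp
  hence "sin a = sin b \<and> cos a = cos b" by (metis cis.sel)
  with rr show "r = r' \<and> (\<exists>k::int. a = b + 2*pi*k)" using sin_cos_eq_iff by blast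
next
  assume "r = r' \<and> (\<exists>k::int. a = b + 2*pi*k)"
  then obtain k::int where "r = r'" "a = b + 2*pi*k" by blast
  hence "sin a = sin b \<and> cos a = cos b" using sin_cos_eq_iff by blast
  hence "cis a = cis b" by (simp add: complex_eq_iff)
  thus "complex_of_real r * cis a = complex_of_real r' * cis b" using \<open>r = r'\<close> by simp
qed

lemma norm_rcis: "norm (complex_of_real r * cis x) = abs r"
  by (simp add: norm_mult)

lemma pi_cancel:
  fixes a b c :: real
  assumes "pi/3 * a = pi/3 * b + 2*pi*c"
  shows "a = b + 6*c"
proof -
  have "pi * a = pi * (b + 6*c)" using assms by (simp add: algebra_simps)
  thus ?thesis by simp
qed

lemma layered_planar:
  fixes V :: "'a set" and E :: "'a set set" and lay :: "'a \<Rightarrow> nat" and ang :: "'a \<Rightarrow> int"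
  assumes inj: "inj_on (\<lambda>v. (lay v, ang v mod 6)) V"
  and par: "\<And>u u'. u \<in> V \<Longrightarrow> u' \<in> V \<Longrightarrow> lay u = lay u' \<Longrightarrow> even (ang u - ang u')"
  and edges: "\<And>e. e \<in> E \<Longrightarrow> \<exists>u v. e = {u,v} \<and> u \<in> V \<and> v \<in> V \<and> lay v = Suc (lay u)
        \<and> ((ang v - ang u) mod 6 = 1 \<or> (ang v - ang u) mod 6 = 5)"
  shows "planar V E"
proof -
  have "\<forall>e\<in>E. \<exists>uv. e = {fst uv, snd uv} \<and> fst uv \<in> V \<and> snd uv \<in> V \<and> lay (snd uv) = Suc (lay (fst uv))
        \<and> ((ang (snd uv) - ang (fst uv)) mod 6 = 1 \<or> (ang (snd uv) - ang (fst uv)) mod 6 = 5)"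
    using edges by fastforce
  then obtain ch where ch: "\<And>e. e \<in> E \<Longrightarrow> e = {fst (ch e), snd (ch e)} \<and> fst (ch e) \<in> V \<and> snd (ch e) \<in> V \<and> lay (snd (ch e)) = Suc (lay (fst (ch e)))
        \<and> ((ang (snd (ch e)) - ang (fst (ch e))) mod 6 = 1 \<or> (ang (snd (ch e)) - ang (fst (ch e))) mod 6 = 5)"
    by metis
  define lo where "lo e = fst (ch e)" for e
  define hi where "hi e = snd (ch e)" for e
  note LH = ch[folded lo_def hi_def]
  define dl where "dl e = (if (ang (hi e) - ang (lo e)) mod 6 = 1 then 1 else -1::int)" for e
  define pos where "pos v = complex_of_real (real (lay v) + 1) * cis (pi/3 * real_of_int (ang v))" for v
  define g where "g e t = complex_of_real (real (lay (lo e)) + 1 + t) * cis (pi/3 * (real_of_int (ang (lo e)) + t * real_of_int (dl e)))" for e t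
  have posinj: "u = v" if "u \<in> V" "v \<in> V" "pos u = pos v" for u v
  proof -
    from that(3) obtain k::int where l: "real (lay u) + 1 = real (lay v) + 1" and a: "pi/3 * real_of_int (ang u) = pi/3 * real_of_int (ang v) + 2*pi*k"
      unfolding pos_def by (subst (asm) polar_eq) auto
    from pi_cancel[OF a] have "real_of_int (ang u) = real_of_int (ang v) + 6 * k" by simp
    hence "ang u = ang v + 6 * k" by linarith
    hence "ang u mod 6 = ang v mod 6" by simp
    with l have "(lay u, ang u mod 6) = (lay v, ang v mod 6)" by simp
    with inj that(1,2) show ?thesis by (meson inj_onD)
  qed
  have g0: "g e 0 = pos (lo e)" for e unfolding g_def pos_def by simp
  have g1: "g e 1 = pos (hi e)" if "e \<in> E" for e
  proof -
    have "\<exists>k::int. ang (hi e) = ang (lo e) + dl e + 6 * k"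
    proof -
      define q where "q = (ang (hi e) - ang (lo e)) div 6"
      have d: "ang (hi e) - ang (lo e) = (ang (hi e) - ang (lo e)) mod 6 + 6 * q" unfolding q_def by simp
      show ?thesis
      proof (cases "(ang (hi e) - ang (lo e)) mod 6 = 1")
        case True
        then show ?thesis using d unfolding dl_def by (intro exI[of _ q]) simp
      next
        case False
        hence "(ang (hi e) - ang (lo e)) mod 6 = 5" using LH[OF that] by simp
        then show ?thesis using d False unfolding dl_def by (intro exI[of _ "q+1"]) simp
      qed
    qed
    then obtain k::int where k: "ang (hi e) = ang (lo e) + dl e + 6 * k" by blast
    have kk: "pi/3 * (real_of_int (ang (lo e)) + 1 * real_of_int (dl e)) = pi/3 * real_of_int (ang (hi e)) + 2*pi*real_of_int (-k)"
      using k by (simp add: field_simps)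
    have "complex_of_real (real (lay (lo e)) + 1 + 1) * cis (pi/3 * (real_of_int (ang (lo e)) + 1 * real_of_int (dl e)))
         = complex_of_real (real (lay (hi e)) + 1) * cis (pi/3 * real_of_int (ang (hi e)))"
      using LH[OF that] kk by (subst polar_eq) (auto intro!: exI[of _ "-k"])
    thus ?thesis unfolding g_def pos_def by simp
  qed
  have gnorm: "norm (g e t) = real (lay (lo e)) + 1 + t" if "t \<ge> 0" for e t
    using that unfolding g_def norm_rcis by simp
  have arc: "arc (g e)" for e
  proof -
    have "continuous_on {0..1} (g e)" unfolding g_def by (intro continuous_intros)
    moreover have "inj_on (g e) {0..1}"
    proof (rule inj_onI)
      fix s t assume st: "s \<in> {0..1}" "t \<in> {0..1}" "g e s = g e t"
      have "real (lay (lo e)) + 1 + s = real (lay (lo e)) + 1 + t"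
        using gnorm[of s e] gnorm[of t e] st by (metis atLeastAtMost_iff)
      thus "s = t" by simp
    qed
    ultimately show ?thesis by (simp add: arc_def path_def)
  qed
  have img: "path_image (g e) \<inter> pos ` V = pos ` e" if "e \<in> E" for e
  proof
    show "pos ` e \<subseteq> path_image (g e) \<inter> pos ` V"
    proof -
      have "pos (lo e) \<in> path_image (g e)" "pos (hi e) \<in> path_image (g e)"
        using g0[of e] g1[OF that] unfolding path_image_def by (metis atLeastAtMost_iff image_eqI order_refl zero_le_one)+
      moreover have "e = {lo e, hi e}" "lo e \<in> V" "hi e \<in> V" using LH[OF that] by blast+
      moreover hence "pos ` e = {pos (lo e), pos (hi e)}" by (metis image_insert image_empty)
      ultimately show ?thesis by auto
    qed
  next
    show "path_image (g e) \<inter> pos ` V \<subseteq> pos ` e"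
    proof
      fix z assume "z \<in> path_image (g e) \<inter> pos ` V"
      then obtain t w where t: "t \<in> {0..1}" "z = g e t" and w: "w \<in> V" "z = pos w"
        unfolding path_image_def by auto
      have "norm z = real (lay w) + 1" using w(2) unfolding pos_def by (simp only: norm_rcis)
      moreover have "norm z = real (lay (lo e)) + 1 + t" using t gnorm by auto
      ultimately have "t = real (lay w) - real (lay (lo e))" by simp
      hence td: "t = real_of_int (int (lay w) - int (lay (lo e)))" by simp
      have "t = 0 \<or> t = 1"
      proof (cases "int (lay w) - int (lay (lo e)) \<le> 0")
        case True
        hence "t \<le> 0" using td by (metis of_int_le_0_iff)
        thus ?thesis using t(1) by simp
      next
        case False
        hence "int (lay w) - int (lay (lo e)) \<ge> 1" by simp
        hence "t \<ge> 1" using td by (metis of_int_le_iff of_int_1)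
        thus ?thesis using t(1) by simp
      qed
      hence "z = pos (lo e) \<or> z = pos (hi e)" using t g0 g1[OF that] by auto
      moreover have "lo e \<in> e" "hi e \<in> e" using LH[OF that] by blast+
      ultimately show "z \<in> pos ` e" by auto
    qed
  qed
  have cross: "path_image (g e) \<inter> path_image (g e') \<subseteq> pos ` (e \<inter> e')"
    if e: "e \<in> E" and e': "e' \<in> E" and ne: "e \<noteq> e'" for e e'
  proof
    fix z assume z: "z \<in> path_image (g e) \<inter> path_image (g e')"
    have endpt: "z \<in> pos ` (e \<inter> e')" if "z \<in> pos ` e \<or> z \<in> pos ` e'"
    proof -
      have eV: "e \<subseteq> V" "e' \<subseteq> V" using LH[OF e] LH[OF e'] by (metis insert_subset empty_subsetI)+
      from that have "z \<in> pos ` e \<and> z \<in> pos ` e'"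
        using img[OF e] img[OF e'] z eV by blast
      then obtain w w' where "w \<in> e" "w' \<in> e'" "z = pos w" "z = pos w'" by blast
      with posinj eV have "w = w'" by blast
      with \<open>w \<in> e\<close> \<open>w' \<in> e'\<close> \<open>z = pos w\<close> show ?thesis by blast
    qed
    from z obtain s s' where s: "s \<in> {0..1}" "z = g e s" and s': "s' \<in> {0..1}" "z = g e' s'"
      unfolding path_image_def by auto
    show "z \<in> pos ` (e \<inter> e')"
    proof (cases "s \<in> {0,1} \<or> s' \<in> {0,1}")
      case True
      have lh: "lo e \<in> e" "hi e \<in> e" "lo e' \<in> e'" "hi e' \<in> e'" using LH[OF e] LH[OF e'] by auto
      from True have "s = 0 \<or> s = 1 \<or> s' = 0 \<or> s' = 1" by auto
      hence "z \<in> pos ` e \<or> z \<in> pos ` e'"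
      proof (elim disjE)
        assume "s = 0" thus ?thesis using s(2) g0 lh by auto
      next
        assume "s = 1" thus ?thesis using s(2) g1[OF e] lh by auto
      next
        assume "s' = 0" thus ?thesis using s'(2) g0 lh by auto
      next
        assume "s' = 1" thus ?thesis using s'(2) g1[OF e'] lh by auto
      qed
      thus ?thesis by (rule endpt)
    next
      case False
      with s s' have si: "0 < s" "s < 1" "0 < s'" "s' < 1" by auto
      have "real (lay (lo e)) + 1 + s = real (lay (lo e')) + 1 + s'"
        using gnorm[of s e] gnorm[of s' e'] s s' by auto
      hence h: "real_of_int (int (lay (lo e)) - int (lay (lo e'))) = s' - s" by simp
      hence "real_of_int (int (lay (lo e)) - int (lay (lo e'))) < 1" "real_of_int (int (lay (lo e)) - int (lay (lo e'))) > -1" using si by linarith+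
      hence "int (lay (lo e)) - int (lay (lo e')) < 1" "int (lay (lo e)) - int (lay (lo e')) > -1"
        by (metis of_int_less_1_iff, metis of_int_minus of_int_1 of_int_less_iff)
      hence "int (lay (lo e)) - int (lay (lo e')) = 0" by linarith
      hence ll: "lay (lo e) = lay (lo e')" by simp
      with h have ss: "s = s'" by simp
      obtain k::int where k: "pi/3 * (real_of_int (ang (lo e)) + s * real_of_int (dl e)) = pi/3 * (real_of_int (ang (lo e')) + s * real_of_int (dl e')) + 2*pi*k"
      proof -
        have "complex_of_real (real (lay (lo e)) + 1 + s) * cis (pi/3 * (real_of_int (ang (lo e)) + s * real_of_int (dl e)))
            = complex_of_real (real (lay (lo e')) + 1 + s) * cis (pi/3 * (real_of_int (ang (lo e')) + s * real_of_int (dl e')))"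
          using s(2) s'(2) ss unfolding g_def by simp
        hence "\<exists>k::int. pi/3 * (real_of_int (ang (lo e)) + s * real_of_int (dl e)) = pi/3 * (real_of_int (ang (lo e')) + s * real_of_int (dl e')) + 2*pi*k"
          using si by (subst (asm) polar_eq) auto
        thus ?thesis using that by blast
      qed
      hence k2: "real_of_int (ang (lo e) - ang (lo e') - 6*k) = s * real_of_int (dl e' - dl e)"
      proof -
        from pi_cancel[OF k] show ?thesis by (simp add: algebra_simps)
      qed
      have ev: "even (ang (lo e) - ang (lo e'))" using par LH[OF e] LH[OF e'] ll by blast
      show ?thesis
      proof (cases "dl e = dl e'")
        case True
        with k2 have "ang (lo e) = ang (lo e') + 6*k" by simp
        hence "ang (lo e) mod 6 = ang (lo e') mod 6" by simp
        hence lo: "lo e = lo e'" using inj ll LH[OF e] LH[OF e'] by (auto dest: inj_onD)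
        have "ang (hi e) mod 6 = ang (hi e') mod 6"
        proof -
          have "(ang (hi e) - ang (lo e)) mod 6 = (ang (hi e') - ang (lo e')) mod 6"
            using True LH[OF e] LH[OF e'] unfolding dl_def by (auto split: if_splits)
          with lo show ?thesis by (metis mod_diff_cong diff_add_cancel mod_add_cong)
        qed
        moreover have "lay (hi e) = lay (hi e')" using LH[OF e] LH[OF e'] lo by metis
        moreover have "hi e \<in> V" "hi e' \<in> V" using LH[OF e] LH[OF e'] by blast+
        ultimately have "hi e = hi e'" using inj by (metis (mono_tags, lifting) inj_onD)
        with lo have "e = e'" using LH[OF e] LH[OF e'] by metis
        with ne show ?thesis by simp
      next
        case False
        hence "dl e' - dl e = 2 \<or> dl e' - dl e = -2" unfolding dl_def by (auto split: if_splits)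
        obtain q where q: "ang (lo e) - ang (lo e') = 2*q" using ev by (elim evenE)
        define m where "m = q - 3*k"
        have m: "ang (lo e) - ang (lo e') - 6*k = 2*m" using q unfolding m_def by simp
        have r: "real_of_int (2*m) = s * real_of_int (dl e' - dl e)" using k2 m by simp
        have "real_of_int m = s \<or> real_of_int m = -s"
        proof (cases "dl e' - dl e = 2")
          case True thus ?thesis using r by simp
        next
          case False2: False
          hence "dl e' - dl e = -2" using \<open>dl e' - dl e = 2 \<or> dl e' - dl e = -2\<close> by simp
          thus ?thesis using r by simp
        qed
        moreover have "real_of_int m \<noteq> s" "real_of_int m \<noteq> -s"
        proof -
          show "real_of_int m \<noteq> s"
          proof (cases "m \<le> 0")
            case True hence "real_of_int m \<le> 0" by simp
            thus ?thesis using si by linarith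
          next
            case False hence "real_of_int m \<ge> 1" by simp
            thus ?thesis using si by linarith
          qed
          show "real_of_int m \<noteq> -s"
          proof (cases "m \<ge> 0")
            case True hence "real_of_int m \<ge> 0" by simp
            thus ?thesis using si by linarith
          next
            case False hence "real_of_int m \<le> -1" by simp
            thus ?thesis using si by linarith
          qed
        qed
        ultimately have False by blast
        thus ?thesis ..
      qed
    qed
  qed
  have ends: "{pathstart (g e), pathfinish (g e)} = pos ` e" if "e \<in> E" for e
  proof -
    have "e = {lo e, hi e}" using LH[OF that] by blast
    hence "pos ` e = {pos (lo e), pos (hi e)}" by (metis image_insert image_empty)
    thus ?thesis using g0[of e] g1[OF that] by (simp add: pathstart_def pathfinish_def)
  qed
  have ip: "inj_on pos V" by (rule inj_onI) (rule posinj)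
  show ?thesis unfolding planar_def
    apply (rule exI[of _ pos], rule exI[of _ g])
    using ip arc ends img cross by blast
qed

lemma edge_form:
  assumes "e \<in> kron_E (Knnn_E n) K2_E"
  shows "\<exists>X Y j k. X < 3 \<and> Y < 3 \<and> j < n \<and> k < n \<and> X \<noteq> Y \<and> e = {((X,j),0::nat),((Y,k),1)}"
proof -
  from assms obtain g g' h h' where e: "e = {(g,h),(g',h')}" and gg: "{g,g'} \<in> Knnn_E n" and hh: "{h,h'} \<in> K2_E"
    unfolding kron_E_def by blast
  from gg obtain u v where uv: "{g,g'} = {u,v}" "u \<in> Knnn_V n" "v \<in> Knnn_V n" "fst u \<noteq> fst v"
    unfolding Knnn_E_def by blast
  hence g: "g \<in> Knnn_V n" "g' \<in> Knnn_V n" "fst g \<noteq> fst g'"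
    by (auto simp: doubleton_eq_iff)
  obtain X j where gx: "g = (X,j)" by (cases g)
  obtain Y k where gy: "g' = (Y,k)" by (cases g')
  have r: "X < 3" "j < n" "Y < 3" "k < n" "X \<noteq> Y" using g unfolding gx gy Knnn_V_def by auto
  from hh have "(h = 0 \<and> h' = 1) \<or> (h = 1 \<and> h' = 0)" unfolding K2_E_def by (auto simp: doubleton_eq_iff)
  thus ?thesis
  proof
    assume "h = 0 \<and> h' = 1"
    hence "e = {((X,j),0::nat),((Y,k),1)}" using e gx gy by simp
    thus ?thesis using r by blast
  next
    assume "h = 1 \<and> h' = 0"
    hence "e = {((Y,k),0::nat),((X,j),1)}" using e gx gy by (simp add: insert_commute)
    thus ?thesis using r by blast
  qed
qed

definition sgnsum :: "((nat \<times> nat) \<times> nat) set \<Rightarrow> int" where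
  "sgnsum e = (\<Sum>v\<in>e. if snd v = 1 then int (snd (fst v)) else - int (snd (fst v)))"

definition fpart :: "nat \<Rightarrow> ((nat \<times> nat) \<times> nat) set \<Rightarrow> nat" where
  "fpart n e = nat ((sgnsum e mod int (n+1)) div 2)"

lemma sgnsum_edge: "sgnsum {((X,j),0),((Y,k),1)} = int k - int j"
  unfolding sgnsum_def by simp

definition layt :: "nat \<Rightarrow> nat \<Rightarrow> (nat \<times> nat) \<times> nat \<Rightarrow> nat" where
  "layt n t v = (if snd v = 0 then 2 * snd (fst v) + 1 else nat (2 * ((int (snd (fst v)) - 2 * int t) mod int (n+1))))"

definition angt :: "nat \<Rightarrow> nat \<Rightarrow> (nat \<times> nat) \<times> nat \<Rightarrow> int" where
  "angt n t v = 2 * int (fst (fst v)) + 3 * int (layt n t v)"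

lemma mod_shift:
  fixes a b N c :: int
  assumes "a mod N = c"
  shows "(a + b) mod N = (c + b) mod N"
  using assms by (metis mod_add_left_eq)

lemma ang_diff: "X < 3 \<Longrightarrow> Y < 3 \<Longrightarrow> X \<noteq> Y \<Longrightarrow>
   (2 * (int X - int Y) + 3) mod 6 = 1 \<or> (2 * (int X - int Y) + 3) mod 6 = 5"
proof -
  assume "X < 3" "Y < 3" "X \<noteq> Y"
  hence "(X = 0 \<or> X = 1 \<or> X = 2) \<and> (Y = 0 \<or> Y = 1 \<or> Y = 2)" by auto
  with \<open>X \<noteq> Y\<close> show ?thesis by auto
qed

lemma part_planar:
  "planar (kron_V (Knnn_V n) K2_V) {e \<in> kron_E (Knnn_E n) K2_E. fpart n e = t}"
proof (rule layered_planar[where lay = "layt n t" and ang = "angt n t"])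
  let ?V = "kron_V (Knnn_V n) K2_V"
  have V: "v \<in> ?V \<longleftrightarrow> fst (fst v) < 3 \<and> snd (fst v) < n \<and> (snd v = 0 \<or> snd v = 1)" for v
    unfolding kron_V_def Knnn_V_def K2_V_def by (cases v) auto
  show "inj_on (\<lambda>v. (layt n t v, angt n t v mod 6)) ?V"
  proof (rule inj_onI)
    fix u v assume u: "u \<in> ?V" and v: "v \<in> ?V" and eq: "(layt n t u, angt n t u mod 6) = (layt n t v, angt n t v mod 6)"
    obtain X j s where u': "u = ((X,j),s)" by (metis prod.collapse)
    obtain X' j' s' where v': "v = ((X',j'),s')" by (metis prod.collapse)
    from u v have r: "X < 3" "j < n" "s = 0 \<or> s = 1" "X' < 3" "j' < n" "s' = 0 \<or> s' = 1"
      unfolding u' v' V by auto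
    from eq have l: "layt n t u = layt n t v" and a: "angt n t u mod 6 = angt n t v mod 6" by auto
    from a l have "(2 * int X + 3 * int (layt n t u)) mod 6 = (2 * int X' + 3 * int (layt n t u)) mod 6"
      unfolding u' v' angt_def by simp
    hence "6 dvd ((2 * int X + 3 * int (layt n t u)) - (2 * int X' + 3 * int (layt n t u)))"
      by (simp only: mod_eq_dvd_iff)
    hence dv: "6 dvd (2 * (int X - int X'))" by (simp add: algebra_simps)
    have "(X = 0 \<or> X = 1 \<or> X = 2) \<and> (X' = 0 \<or> X' = 1 \<or> X' = 2)" using r by auto
    hence XX: "X = X'" using dv by auto
    have "s = s' \<and> j = j'"
    proof -
      have par0: "odd (layt n t ((Z,i),0))" for Z i
        unfolding layt_def by simp
      have par1: "even (layt n t ((Z,i),1))" for Z i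
      proof -
        have "layt n t ((Z,i),1) = 2 * nat ((int i - 2 * int t) mod int (n+1))"
          unfolding layt_def by (simp add: nat_mult_distrib)
        thus ?thesis by simp
      qed
      show ?thesis
      proof (cases "s = 0")
        case True
        show ?thesis
        proof (cases "s' = 0")
          case True
          with \<open>s = 0\<close> l show ?thesis unfolding u' v' layt_def by simp
        next
          case False
          hence "s' = 1" using r by simp
          hence False using \<open>s = 0\<close> l par0[of X j] par1[of X' j'] unfolding u' v' by simp
          thus ?thesis ..
        qed
      next
        case False
        hence s1: "s = 1" using r by simp
        show ?thesis
        proof (cases "s' = 0")
          case True
          hence False using s1 l par0[of X' j'] par1[of X j] unfolding u' v' by simp
          thus ?thesis ..
        next
          case False
          hence s1': "s' = 1" using r by simp
          have N: "int (n+1) > 0" by simp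
          from l s1 s1' have "nat (2 * ((int j - 2 * int t) mod int (n+1))) = nat (2 * ((int j' - 2 * int t) mod int (n+1)))"
            unfolding u' v' layt_def by simp
          hence e1: "(int j - 2 * int t) mod int (n+1) = (int j' - 2 * int t) mod int (n+1)"
            using N by (simp add: nat_eq_iff)
          have "(int j - 2 * int t + 2 * int t) mod int (n+1) = (int j' - 2 * int t + 2 * int t) mod int (n+1)"
            using e1 by (metis mod_add_left_eq)
          hence "int j mod int (n+1) = int j' mod int (n+1)" by simp
          hence "int j = int j'" using r by simp
          thus ?thesis using s1 s1' by simp
        qed
      qed
    qed
    with XX show "u = v" unfolding u' v' by simp
  qed
  show "even (angt n t u - angt n t u')" if "layt n t u = layt n t u'" for u u'
    using that unfolding angt_def by simp
  fix e assume "e \<in> {e \<in> kron_E (Knnn_E n) K2_E. fpart n e = t}"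
  hence eE: "e \<in> kron_E (Knnn_E n) K2_E" and ft: "fpart n e = t" by auto
  from edge_form[OF eE] obtain X Y j k where r: "X < 3" "Y < 3" "j < n" "k < n" "X \<noteq> Y"
    and e: "e = {((X,j),0::nat),((Y,k),1)}" by blast
  define d where "d = (int k - int j) mod int (n+1)"
  have d0: "0 \<le> d" "d < int (n+1)" unfolding d_def by simp_all
  from ft have "nat (d div 2) = t" unfolding fpart_def e sgnsum_edge d_def by simp
  hence dd: "d = 2 * int t \<or> d = 2 * int t + 1" using d0 by linarith
  have uV: "((X,j),0) \<in> ?V" "((Y,k),1) \<in> ?V" using r V by auto
  show "\<exists>u v. e = {u,v} \<and> u \<in> ?V \<and> v \<in> ?V \<and> layt n t v = Suc (layt n t u)
        \<and> ((angt n t v - angt n t u) mod 6 = 1 \<or> (angt n t v - angt n t u) mod 6 = 5)"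
  proof (cases "d = 2 * int t")
    case True
    have "(int k - int j + (int j - 2 * int t)) mod int (n+1) = (2 * int t + (int j - 2 * int t)) mod int (n+1)"
      using mod_shift[of "int k - int j" "int (n+1)" "2 * int t" "int j - 2 * int t"] True unfolding d_def by simp
    hence m: "(int k - 2 * int t) mod int (n+1) = int j" using r by simp
    have lu: "layt n t ((Y,k),1) = 2 * j" unfolding layt_def using m by simp
    have lv: "layt n t ((X,j),0) = Suc (2 * j)" unfolding layt_def by simp
    show ?thesis
      apply (rule exI[of _ "((Y,k),1)"], rule exI[of _ "((X,j),0)"])
      using uV lu lv ang_diff[OF r(1,2,5)] e unfolding angt_def
      by (auto simp: algebra_simps insert_commute)
  next
    case False
    hence True': "d = 2 * int t + 1" using dd by simp
    have "(int k - int j + (int j - 2 * int t)) mod int (n+1) = (2 * int t + 1 + (int j - 2 * int t)) mod int (n+1)"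
      using mod_shift[of "int k - int j" "int (n+1)" "2 * int t + 1" "int j - 2 * int t"] True' unfolding d_def by simp
    hence m: "(int k - 2 * int t) mod int (n+1) = int j + 1" using r by simp
    have lv: "layt n t ((Y,k),1) = Suc (Suc (2 * j))" unfolding layt_def using m by simp
    have lu: "layt n t ((X,j),0) = Suc (2 * j)" unfolding layt_def by simp
    have ad: "(2 * (int Y - int X) + 3) mod 6 = 1 \<or> (2 * (int Y - int X) + 3) mod 6 = 5"
      using ang_diff[of Y X] r by auto
    show ?thesis
      apply (rule exI[of _ "((X,j),0)"], rule exI[of _ "((Y,k),1)"])
      using uV lu lv ad e unfolding angt_def
      by (auto simp: algebra_simps)
  qed
qed

theorem lemma4p5:
  fixes p :: nat
  shows "planar_partition (kron_V (Knnn_V (4*p+3)) K2_V) (kron_E (Knnn_E (4*p+3)) K2_E) (2*p+2)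
       \<and> thickness (kron_V (Knnn_V (4*p+3)) K2_V) (kron_E (Knnn_E (4*p+3)) K2_E) \<le> 2*p+2"
proof -
  let ?n = "4*p+3"
  have pp: "planar_partition (kron_V (Knnn_V ?n) K2_V) (kron_E (Knnn_E ?n) K2_E) (2*p+2)"
    unfolding planar_partition_def
  proof (intro exI[of _ "fpart ?n"] conjI ballI allI impI)
    fix e assume eE: "e \<in> kron_E (Knnn_E ?n) K2_E"
    from edge_form[OF eE] obtain X Y j k where e: "e = {((X,j),0::nat),((Y,k),1)}" by blast
    define d where "d = (int k - int j) mod int (?n+1)"
    have "0 \<le> d" "d < int (?n+1)" unfolding d_def by simp_all
    hence "nat (d div 2) < 2*p+2" by linarith
    thus "fpart ?n e < 2*p+2" unfolding fpart_def e sgnsum_edge d_def .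
  next
    fix i assume "i < 2*p+2"
    show "planar (kron_V (Knnn_V ?n) K2_V) {e \<in> kron_E (Knnn_E ?n) K2_E. fpart ?n e = i}"
      by (rule part_planar)
  qed
  moreover have "thickness (kron_V (Knnn_V ?n) K2_V) (kron_E (Knnn_E ?n) K2_E) \<le> 2*p+2"
    unfolding thickness_def by (rule Least_le) (rule pp)
  ultimately show ?thesis by blast
qed

end
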